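(* For every integer $n\ge1$, $$\sum_{d\mid n,\ d'\mid n} c_d\Big(\frac{n}{d'}\Big)c_{d'}\Big(\frac{n}{d}\Big)=n\,\tau(n),$$ where the sum runs over all ordered pairs $(d,d')$ of positive divisors of $n$.
   Context: For integers $m\ge1$ and $x$, the Ramanujan sum is $c_m(x)=\sum_{1\le j\le m,\ (j,m)=1} e^{2\pi i jx/m}$. $\tau(n)$ is the number of positive divisors of $n$. *)

theory Defs
  imports "HOL-Analysis.Analysis"
begin

definition ramanujan_sum :: "nat \<Rightarrow> int \<Rightarrow> complex" where
  "ramanujan_sum m x =
     (\<Sum>j\<in>{j. 1 \<le> j \<and> j \<le> m \<and> coprime j m}.
        exp (2 * pi * \<i> * of_nat j * of_int x / of_nat m))"

definition num_divisors :: "nat \<Rightarrow> nat" where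
  "num_divisors n = card {d. d dvd n \<and> 0 < d}"

end

theory Submission
  imports Defs
begin
definition E :: "nat \<Rightarrow> int \<Rightarrow> complex" where
 "E m x = exp (2 * pi * \<i> * of_int x / of_nat m)"

lemma E_1_iff: assumes "m > 0" shows "E m x = 1 \<longleftrightarrow> int m dvd x"
proof
  assume "E m x = 1"
  then obtain k :: int where "Im (2 * pi * \<i> * of_int x / of_nat m) = of_int (2*k) * pi"
    unfolding E_def exp_eq_1 by blast
  then have "2 * pi * of_int x / real m = of_int (2*k) * pi" by simp
  then have "of_int x = real m * of_int k" using assms by (simp add: field_simps)
  then have "x = int m * k" by (metis of_int_eq_iff of_int_mult of_int_of_nat_eq)
  then show "int m dvd x" by simp
next
  assume "int m dvd x"
  then obtain k where x: "x = int m * k" by auto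
  have "E m x = exp (\<i> * (of_int k * (of_real pi * 2)))"
    unfolding E_def x using assms by (simp add: field_simps)
  then show "E m x = 1" by simp
qed

lemma E_pow: "E m (int k * x) = E m x ^ k"
  unfolding E_def by (simp add: exp_of_nat_mult[symmetric] mult_ac)

lemma E_scale: assumes "g > 0" shows "E (m*g) (x * int g) = E m x"
  unfolding E_def using assms by (simp add: field_simps)

lemma geo: assumes "d > 0"
  shows "(\<Sum>j\<in>{1..d}. E d (int j * x)) = (if int d dvd x then of_nat d else 0)"
proof (cases "int d dvd x")
  case True
  then have "E d (int j * x) = 1" for j using E_1_iff assms by auto
  then show ?thesis using True by simp
next
  case False
  define w where "w = E d x"
  have w1: "w \<noteq> 1" using False E_1_iff assms w_def by auto
  have wd: "w ^ d = 1" unfolding w_def E_pow[symmetric] using E_1_iff assms by simp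
  have "(\<Sum>j\<in>{1..d}. E d (int j * x)) = (\<Sum>j\<in>{1..d}. w ^ j)"
    by (simp add: E_pow w_def)
  also have "\<dots> = (\<Sum>j<d. w ^ Suc j)"
    using sum.atLeast1_atMost_eq[of "\<lambda>j. w ^ j" d] by simp
  also have "\<dots> = w * (\<Sum>j<d. w ^ j)" by (simp add: sum_distrib_left)
  also have "\<dots> = 0" using geometric_sum[OF w1, of d] wd by simp
  finally show ?thesis using False by simp
qed

definition R :: "nat \<Rightarrow> nat set" where "R e = {j. 1 \<le> j \<and> j \<le> e \<and> coprime j e}"

lemma ram_E: "ramanujan_sum e x = (\<Sum>j\<in>R e. E e (int j * x))"
  unfolding ramanujan_sum_def E_def R_def by (simp add: mult_ac)

lemma gcd_h: fixes e d j :: nat assumes "e dvd d" "d > 0" "coprime j e"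
  shows "gcd (j * (d div e)) d = d div e"
proof -
  have d: "d = e * (d div e)" using assms by simp
  have "gcd ((d div e) * j) ((d div e) * e) = (d div e) * gcd j e"
    by (rule gcd_mult_distrib_nat[symmetric])
  also have "gcd j e = 1" using assms(3) by simp
  finally have "gcd ((d div e) * j) ((d div e) * e) = d div e" by simp
  then show ?thesis using d by (simp add: mult.commute)
qed

lemma partition: assumes "d > 0"
  shows "(\<Sum>j\<in>{1..d}. E d (int j * x)) = (\<Sum>e\<in>{e. e dvd d}. ramanujan_sum e x)"
proof -
  define h where "h = (\<lambda>(e::nat, j::nat). j * (d div e))"
  define S where "S = Sigma {e. e dvd d} R"
  have fin: "finite {e. e dvd d}" using assms by simp
  have finR: "finite (R e)" for e unfolding R_def by (rule finite_subset[of _ "{..e}"]) auto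
  have "(\<Sum>e\<in>{e. e dvd d}. ramanujan_sum e x) = (\<Sum>e\<in>{e. e dvd d}. \<Sum>j\<in>R e. E e (int j * x))"
    by (simp add: ram_E)
  also have "\<dots> = (\<Sum>(e,j)\<in>S. E e (int j * x))"
    unfolding S_def using fin finR by (subst sum.Sigma) auto
  also have "\<dots> = (\<Sum>p\<in>S. E d (int (h p) * x))"
  proof (rule sum.cong[OF refl])
    fix p assume "p \<in> S"
    then obtain e j where p: "p = (e,j)" "e dvd d" by (auto simp: S_def)
    have ge: "d div e > 0" using p assms by (metis dvd_div_eq_0_iff gr0I not_gr0)
    have "E d (int (h p) * x) = E (e * (d div e)) ((int j * x) * int (d div e))"
      using p by (simp add: h_def mult_ac)
    also have "\<dots> = E e (int j * x)" by (rule E_scale[OF ge])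
    finally show "(case p of (e, j) \<Rightarrow> E e (int j * x)) = E d (int (h p) * x)" using p by simp
  qed
  also have "\<dots> = (\<Sum>k\<in>{1..d}. E d (int k * x))"
  proof (rule sum.reindex_bij_betw)
    show "bij_betw h S {1..d}"
      unfolding bij_betw_def
    proof
      show "inj_on h S"
      proof (rule inj_onI)
        fix p q assume "p \<in> S" "q \<in> S" "h p = h q"
        then obtain e j e' j' where pq: "p = (e,j)" "q = (e',j')" "e dvd d" "e' dvd d"
          "coprime j e" "coprime j' e'" "j * (d div e) = j' * (d div e')"
          by (auto simp: S_def R_def h_def)
        have "d div e = d div e'" using gcd_h[OF pq(3) assms pq(5)] gcd_h[OF pq(4) assms pq(6)] pq(7) by simp
        have "d div e > 0" using pq assms by (metis dvd_div_eq_0_iff gr0I not_gr0)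
        have "e * (d div e) = e' * (d div e')" using pq(3,4) by simp
        then have ee: "e = e'" using \<open>d div e = d div e'\<close> \<open>d div e > 0\<close> by simp
        then have "j = j'" using pq(7) \<open>d div e > 0\<close> by simp
        then show "p = q" using pq ee by simp
      qed
      show "h ` S = {1..d}"
      proof
        show "h ` S \<subseteq> {1..d}"
        proof
          fix k assume "k \<in> h ` S"
          then obtain e j where ej: "k = j * (d div e)" "e dvd d" "1 \<le> j" "j \<le> e"
            by (auto simp: S_def R_def h_def)
          have "d div e > 0" using ej assms by (metis dvd_div_eq_0_iff gr0I not_gr0)
          then have "k \<ge> 1" using ej by simp
          moreover have "k \<le> e * (d div e)" unfolding ej(1) by (rule mult_le_mono1[OF ej(4)])
          ultimately show "k \<in> {1..d}" using ej by (simp add: dvd_mult_div_cancel)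
        qed
        show "{1..d} \<subseteq> h ` S"
        proof
          fix k assume k: "k \<in> {1..d}"
          define g where "g = gcd k d"
          have gpos: "g > 0" using assms by (simp add: g_def)
          have gk: "g dvd k" and gd: "g dvd d" by (simp_all add: g_def)
          define e where "e = d div g"
          define j where "j = k div g"
          have "e dvd d" unfolding e_def using gd by (metis dvd_div_mult_self dvd_triv_left)
          moreover have "coprime j e" unfolding j_def e_def g_def
            using div_gcd_coprime assms by blast
          moreover have "j \<ge> 1" using k gk gpos by (auto simp: j_def dvd_div_eq_0_iff)
          moreover have "j \<le> e" using k gpos unfolding j_def e_def by (simp add: div_le_mono)
          moreover have "h (e,j) = k"
          proof -
            have dd: "d = (d div g) * g" using gd by simp
            have "d div g > 0" using gd gpos assms by (metis dd gr0I mult_0)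
            then have "d div (d div g) = g" by (metis dd nonzero_mult_div_cancel_left not_gr0)
            then show ?thesis unfolding h_def e_def j_def using gk by simp
          qed
          ultimately show "k \<in> h ` S" unfolding S_def R_def by force
        qed
      qed
    qed
  qed
  finally show ?thesis by simp
qed

lemma Gsum: assumes "d > 0"
  shows "(\<Sum>e\<in>{e. e dvd d}. ramanujan_sum e x) = (if int d dvd x then of_nat d else 0)"
  using partition[OF assms, of x] geo[OF assms, of x] by simp

lemma uniq:
  fixes F K :: "nat \<Rightarrow> complex"
  assumes n: "n > 0" and H: "\<And>d. d dvd n \<Longrightarrow> (\<Sum>e\<in>{e. e dvd d}. F e) = (\<Sum>e\<in>{e. e dvd d}. K e)"
  shows "d dvd n \<Longrightarrow> F d = K d"
proof (induction d rule: less_induct)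
  case (less d)
  have dpos: "d > 0" using less.prems n by (simp add: dvd_pos_nat)
  have split: "{e. e dvd d} = insert d {e. e dvd d \<and> e < d}"
    using dpos by (auto dest: dvd_imp_le)
  have fin: "finite {e. e dvd d \<and> e < d}" by simp
  have eq: "(\<Sum>e\<in>{e. e dvd d \<and> e < d}. F e) = (\<Sum>e\<in>{e. e dvd d \<and> e < d}. K e)"
  proof (rule sum.cong[OF refl])
    fix e assume "e \<in> {e. e dvd d \<and> e < d}"
    then show "F e = K e" using less.IH less.prems dvd_trans by blast
  qed
  have "F d + (\<Sum>e\<in>{e. e dvd d \<and> e < d}. F e) = K d + (\<Sum>e\<in>{e. e dvd d \<and> e < d}. K e)"
    using H[OF less.prems] fin by (simp add: split)
  then show ?case using eq by simp
qed

lemma dvd_iff1: fixes n d d' :: nat assumes "n > 0" "d' dvd n"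
  shows "d dvd n div d' \<longleftrightarrow> d * d' dvd n"
proof -
  have "d' \<noteq> 0" using assms by auto
  then show ?thesis using dvd_div_iff_mult[OF _ assms(2)] by simp
qed

lemma dvd_iff2: fixes n d d'' :: nat assumes "n > 0" "d dvd n" "d'' dvd n"
  shows "n div d dvd n div d'' \<longleftrightarrow> d'' dvd d"
proof -
  have h1: "n div d dvd n div d'' \<longleftrightarrow> (n div d) * d'' dvd n" using dvd_iff1[OF assms(1,3)] by simp
  obtain a where na: "n = d * a" using assms(2) by (auto elim: dvdE)
  have dpos: "d > 0" and apos: "a > 0" using assms(1) na by auto
  have ad: "n div d = a" using na dpos by simp
  have "a * d'' dvd n \<longleftrightarrow> a * d'' dvd a * d" using na by (simp add: mult.commute)
  also have "\<dots> \<longleftrightarrow> d'' dvd d" by (rule nat_mult_dvd_cancel1[OF apos])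
  finally show ?thesis using h1 ad by simp
qed

lemma keyF:
  fixes n d d'' :: nat
  assumes n: "n > 0" and dd: "d'' dvd n" and d: "d dvd n"
  shows "(\<Sum>e\<in>{e. e dvd d}. \<Sum>d'\<in>{d'. d' dvd n}. ramanujan_sum e (int (n div d')) * ramanujan_sum d' (int (n div d'')))
    = (\<Sum>e\<in>{e. e dvd d}. (if e = d'' then of_nat n else 0))"
proof -
  have dpos: "d > 0" using d n by (simp add: dvd_pos_nat)
  have ndpos: "n div d > 0" using dvd_imp_le[OF d n] dpos by (simp add: div_greater_zero_iff)
  have finn: "finite {d'. d' dvd n}" using n by simp
  have find: "finite {e. e dvd d}" using dpos by simp
  have "(\<Sum>e\<in>{e. e dvd d}. \<Sum>d'\<in>{d'. d' dvd n}. ramanujan_sum e (int (n div d')) * ramanujan_sum d' (int (n div d'')))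
     = (\<Sum>d'\<in>{d'. d' dvd n}. (\<Sum>e\<in>{e. e dvd d}. ramanujan_sum e (int (n div d'))) * ramanujan_sum d' (int (n div d'')))"
    by (subst sum.swap) (simp add: sum_distrib_right)
  also have "\<dots> = (\<Sum>d'\<in>{d'. d' dvd n}. (if d' dvd n div d then of_nat d * ramanujan_sum d' (int (n div d'')) else 0))"
  proof (rule sum.cong[OF refl])
    fix d' assume d': "d' \<in> {d'. d' dvd n}"
    have "int d dvd int (n div d') \<longleftrightarrow> d' dvd n div d"
      using dvd_iff1[OF n, of d' d] dvd_iff1[OF n, of d d'] d d' by (simp add: mult.commute)
    then show "(\<Sum>e\<in>{e. e dvd d}. ramanujan_sum e (int (n div d'))) * ramanujan_sum d' (int (n div d''))
        = (if d' dvd n div d then of_nat d * ramanujan_sum d' (int (n div d'')) else 0)"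
      by (simp add: Gsum[OF dpos])
  qed
  also have "\<dots> = (\<Sum>d'\<in>{d'\<in>{d'. d' dvd n}. d' dvd n div d}. of_nat d * ramanujan_sum d' (int (n div d'')))"
    using finn by (rule sum.inter_filter[symmetric])
  also have "{d'\<in>{d'. d' dvd n}. d' dvd n div d} = {d'. d' dvd n div d}"
  proof
    have ndn: "(n div d) * d = n" using d by simp
    show "{y. y dvd n div d} \<subseteq> {d'\<in>{d'. d' dvd n}. d' dvd n div d}"
    proof
      fix x assume "x \<in> {y. y dvd n div d}"
      then have "x dvd n div d" by simp
      then have "x dvd (n div d) * d" by (rule dvd_mult2)
      then show "x \<in> {d'\<in>{d'. d' dvd n}. d' dvd n div d}" using ndn \<open>x dvd n div d\<close> by simp
    qed
  qed auto
  also have "(\<Sum>d'\<in>{d'. d' dvd n div d}. of_nat d * ramanujan_sum d' (int (n div d'')))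
      = of_nat d * (if int (n div d) dvd int (n div d'') then of_nat (n div d) else 0)"
    by (simp add: sum_distrib_left[symmetric] Gsum[OF ndpos])
  also have "\<dots> = (if d'' dvd d then of_nat n else 0)"
    using dvd_iff2[OF n d dd] d by (simp flip: of_nat_mult)
  also have "\<dots> = (\<Sum>e\<in>{e. e dvd d}. (if e = d'' then of_nat n else 0))"
    using find by (simp add: sum.delta)
  finally show ?thesis .
qed

theorem mainTheorem4:
  fixes n :: nat
  assumes "n \<ge> 1"
  shows "(\<Sum>d\<in>{d. d dvd n}. \<Sum>d'\<in>{d'. d' dvd n}.
            ramanujan_sum d (int (n div d')) * ramanujan_sum d' (int (n div d)))
         = of_nat (n * num_divisors n)"
proof -
  have n: "n > 0" using assms by simp
  have diag: "(\<Sum>d'\<in>{d'. d' dvd n}. ramanujan_sum d (int (n div d')) * ramanujan_sum d' (int (n div d))) = of_nat n"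
    if d: "d dvd n" for d
  proof -
    define F where "F = (\<lambda>e. \<Sum>d'\<in>{d'. d' dvd n}. ramanujan_sum e (int (n div d')) * ramanujan_sum d' (int (n div d)))"
    define K where "K = (\<lambda>e. if e = d then (of_nat n :: complex) else 0)"
    have H: "(\<Sum>e\<in>{e. e dvd d0}. F e) = (\<Sum>e\<in>{e. e dvd d0}. K e)" if "d0 dvd n" for d0
      unfolding F_def K_def by (rule keyF[OF n d that])
    have "F d = K d" by (rule uniq[of n F K, OF n H d])
    then show ?thesis by (simp add: F_def K_def)
  qed
  have cardeq: "card {d. d dvd n} = num_divisors n" unfolding num_divisors_def
  proof -
    have "{d. d dvd n} = {d. d dvd n \<and> 0 < d}" using n by (auto simp: dvd_pos_nat)
    then show "card {d. d dvd n} = card {d. d dvd n \<and> 0 < d}" by simp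
  qed
  have "(\<Sum>d\<in>{d. d dvd n}. \<Sum>d'\<in>{d'. d' dvd n}.
            ramanujan_sum d (int (n div d')) * ramanujan_sum d' (int (n div d)))
       = (\<Sum>d\<in>{d. d dvd n}. (of_nat n :: complex))"
    by (rule sum.cong[OF refl]) (simp add: diag)
  also have "\<dots> = of_nat (card {d. d dvd n}) * of_nat n" by simp
  also have "\<dots> = of_nat (n * num_divisors n)" by (simp add: cardeq)
  finally show ?thesis .
qed
end
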